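(* Let $p$ be an odd prime. Then the sequence $\left(\left\lfloor n^{p-1}/p \right\rfloor\right)_{n \ge 1}$ is eventually prime-free.
   Context: A sequence $(a_n)_{n\ge 1}$ of positive integers is called eventually prime-free if there exists an index $n_0$ such that $a_n$ is composite for all $n \ge n_0$. (Here, as in the paper, this is understood as: only finitely many terms $a_n$ are prime.) *)

theory Defs
  imports "HOL-Computational_Algebra.Primes"
begin

definition eventually_prime_free :: "(nat \<Rightarrow> nat) \<Rightarrow> bool" where
  "eventually_prime_free a \<longleftrightarrow> finite {n. n \<ge> 1 \<and> prime (a n)}"

end

theory Submission
  imports Defs "HOL-Number_Theory.Number_Theory"
begin

lemma not_prime_mult:
  fixes a b :: nat
  assumes "a \<ge> 2" "b \<ge> 2"
  shows "\<not> prime (a * b)"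
  using prime_product[of a b] assms by auto

lemma key:
  fixes p n :: nat
  assumes p: "prime p" "odd p" and n: "n \<ge> 2 * p + 2"
  shows "\<not> prime (n ^ (p - 1) div p)"
proof -
  have "p \<ge> 2" using p prime_ge_2_nat by blast
  moreover have "p \<noteq> 2" using p by auto
  ultimately have p2: "p \<ge> 3" by linarith
  have "even (p - 1)" using p p2 by simp
  then obtain m where m0: "p - 1 = 2 * m" by blast
  have m: "m \<ge> 1" using m0 p2 by linarith
  have nm: "n ^ m \<ge> n" using m n by (simp add: self_le_power)
  show ?thesis
  proof (cases "p dvd n")
    case True
    then obtain k where k: "n = p * k" by blast
    have k2: "k \<ge> 2"
    proof (rule ccontr)
      assume "\<not> k \<ge> 2"
      then have "k \<le> 1" by simp
      then have "p * k \<le> p" by simp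
      then show False using k n by linarith
    qed
    have "2*m = Suc (2*m - 1)" using m by simp
    then have "p ^ (2*m) = p * p ^ (2*m - 1)" by (metis power_Suc)
    then have eq: "n ^ (p - 1) = p * (p ^ (2*m - 1) * k ^ (2*m))"
      using m0 k by (simp add: power_mult_distrib)
    have "n ^ (p - 1) div p = p ^ (2*m - 1) * k ^ (2*m)"
      using eq p2 by simp
    moreover have "p ^ (2*m - 1) \<ge> p"
      using p2 m by (intro self_le_power) auto
    moreover have "k ^ (2*m) \<ge> k"
      using k2 m by (intro self_le_power) auto
    moreover have "p ^ (2*m - 1) \<ge> 2" "k ^ (2*m) \<ge> 2" using calculation(2,3) p2 k2 by linarith+
    ultimately show ?thesis using not_prime_mult by metis
  next
    case False
    have "[n ^ (p - 1) = 1] (mod p)" using fermat_theorem[OF p(1) False] .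
    then have "n ^ (p - 1) mod p = 1" using p2 by (simp add: cong_def)
    then have e1: "n ^ (p - 1) = p * (n ^ (p - 1) div p) + 1"
      by (metis div_mult_mod_eq add.commute mult.commute)
    define v where "v = n ^ (p - 1) div p"
    define x where "x = n ^ m"
    have x: "x \<ge> 2 * p + 2" using nm n x_def by simp
    have "x * x = n ^ (p - 1)" using m0 by (simp add: x_def power_mult power2_eq_square flip: power_add mult_2)
    then have xx: "x * x = p * v + 1" using e1 v_def by simp
    have e2: "(x - 1) * (x + 1) = p * v"
    proof -
      have "(x - 1) * (x + 1) = x * x - 1" using x by (simp add: algebra_simps diff_mult_distrib)
      then show ?thesis using xx by simp
    qed
    have "p dvd (x - 1) * (x + 1)" using e2 by simp
    then have "p dvd x - 1 \<or> p dvd x + 1" using p(1) prime_dvd_mult_iff by blast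
    then show ?thesis
    proof
      assume "p dvd x - 1"
      then obtain a where a: "x - 1 = p * a" by blast
      have "p * v = p * (a * (x + 1))" using e2 a by (metis mult.assoc)
      then have "v = a * (x + 1)" using p2 by simp
      moreover have "a \<ge> 2"
      proof (rule ccontr)
        assume "\<not> a \<ge> 2"
        then have "a \<le> 1" by simp
        then have "p * a \<le> p" by simp
        then show False using a x by linarith
      qed
      moreover have "x + 1 \<ge> 2" using x by simp
      ultimately show ?thesis using not_prime_mult v_def by metis
    next
      assume "p dvd x + 1"
      then obtain b where b: "x + 1 = p * b" by blast
      have "p * v = p * ((x - 1) * b)" using e2 b by (metis mult.left_commute)
      then have "v = (x - 1) * b" using p2 by simp
      moreover have "b \<ge> 2"
      proof (rule ccontr)
        assume "\<not> b \<ge> 2"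
        then have "b \<le> 1" by simp
        then have "p * b \<le> p" by simp
        then show False using b x by linarith
      qed
      moreover have "x - 1 \<ge> 2" using x p2 by linarith
      ultimately show ?thesis using not_prime_mult v_def by metis
    qed
  qed
qed

theorem theorem9:
  fixes p :: nat
  assumes "prime p" and "odd p"
  shows "eventually_prime_free (\<lambda>n. n ^ (p - 1) div p)"
proof -
  have "{n. n \<ge> 1 \<and> prime (n ^ (p - 1) div p)} \<subseteq> {..<2*p+2}"
  proof
    fix n assume "n \<in> {n. n \<ge> 1 \<and> prime (n ^ (p - 1) div p)}"
    then have "prime (n ^ (p - 1) div p)" by simp
    then have "\<not> n \<ge> 2*p+2" using key[OF assms] by blast
    then show "n \<in> {..<2*p+2}" by simp
  qed
  then show ?thesis unfolding eventually_prime_free_def using finite_subset by blast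
qed

end
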